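(* Let $(U,\mathcal{I})$ be a laminar matroid given by a laminar family $\mathcal{F}$ with positive integer capacities $\mu(\cdot)$ such that $\mu(B)<\mu(B')$ whenever $B\subsetneq B'$ are in $\mathcal{F}$. Let $f$ be non-negative, monotonically non-decreasing and submodular, $p\in(0,1)$, and run $\mathrm{SIMULATE}$ (see context) to obtain $M,N,w$. Let $$S=N\setminus\bigcup_{B\in\mathcal{F}:\,|N\cap B|>\mu(B)}(N\cap B),$$ i.e. all elements of $N\cap B$ are removed for every $B$ whose constraint is violated by $N$. Let $\beta=2e(1-p)$ and assume $\beta<1$. Then $$\mathbb{E}[w(S)]\ge\Big(1-\frac{2\beta}{(1-\beta)^3}\Big)\mathbb{E}[w(N)].$$
   Context: Laminar matroid: $\mathcal{F}$ is a family of distinct subsets of $U$ any two of which are disjoint or nested, and $\mathcal{I}=\{T\subseteq U:|T\cap B|\le\mu(B)\ \forall B\in\mathcal{F}\}$. Write $f_T(e)=f(T\cup\{e\})-f(T)$; $e$ in $\beta$ denotes the base of the natural logarithm. $\mathrm{SIMULATE}$: each element of $U$ is independently put into a set $H$ with probability $p$. Start with $M=N=\emptyset$. While there exists $e\in U\setminus(M\cup N)$ with $M\cup\{e\}\in\mathcal{I}$, take such an $e$ maximizing $f_M(e)$ (ties broken by a fixed rule); let $M_e$ be the current $M$; if $e\in H$ add $e$ to $M$, else to $N$. Define $w(e)=f_{M_e}(e)$ for $e\in M\cup N$, $w(e)=0$ otherwise, and $w(T)=\sum_{e\in T}w(e)$. *)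

theory Defs
  imports Complex_Main
begin

definition laminar :: "'a set set \<Rightarrow> bool" where
  "laminar F \<longleftrightarrow> (\<forall>A\<in>F. \<forall>B\<in>F. A \<inter> B = {} \<or> A \<subseteq> B \<or> B \<subseteq> A)"

definition lam_indep :: "'a set \<Rightarrow> 'a set set \<Rightarrow> ('a set \<Rightarrow> nat) \<Rightarrow> 'a set set" where
  "lam_indep U F \<mu> = {T. T \<subseteq> U \<and> (\<forall>B\<in>F. card (T \<inter> B) \<le> \<mu> B)}"

definition marg :: "('a set \<Rightarrow> real) \<Rightarrow> 'a set \<Rightarrow> 'a \<Rightarrow> real" where
  "marg f T e = f (insert e T) - f T"

definition submodular_on :: "'a set \<Rightarrow> ('a set \<Rightarrow> real) \<Rightarrow> bool" where
  "submodular_on U f \<longleftrightarrow>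
     (\<forall>S T. S \<subseteq> U \<longrightarrow> T \<subseteq> U \<longrightarrow> f (S \<union> T) + f (S \<inter> T) \<le> f S + f T)"

definition sim_step ::
  "'a set \<Rightarrow> 'a set set \<Rightarrow> ('a set \<Rightarrow> real) \<Rightarrow> ('a set \<Rightarrow> 'a set \<Rightarrow> 'a set \<Rightarrow> 'a) \<Rightarrow> 'a set
   \<Rightarrow> 'a set \<times> 'a set \<times> ('a \<Rightarrow> real) \<Rightarrow> 'a set \<times> 'a set \<times> ('a \<Rightarrow> real)" where
  "sim_step U I f sel H st =
     (case st of (M, N, w) \<Rightarrow>
       (let C = {e \<in> U - (M \<union> N). insert e M \<in> I} in
        if C = {} then (M, N, w)
        else (let Cmax = {e \<in> C. \<forall>e'\<in>C. marg f M e' \<le> marg f M e};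
                  e = sel M N Cmax;
                  w' = w(e := marg f M e) in
              if e \<in> H then (insert e M, N, w') else (M, insert e N, w'))))"

text \<open>SIMULATE run to completion (each step adds an element of U, so card U steps suffice).\<close>
definition simulate ::
  "'a set \<Rightarrow> 'a set set \<Rightarrow> ('a set \<Rightarrow> real) \<Rightarrow> ('a set \<Rightarrow> 'a set \<Rightarrow> 'a set \<Rightarrow> 'a) \<Rightarrow> 'a set
   \<Rightarrow> 'a set \<times> 'a set \<times> ('a \<Rightarrow> real)" where
  "simulate U I f sel H = (sim_step U I f sel H ^^ card U) ({}, {}, (\<lambda>_. 0))"

text \<open>Probability that the random set equals H when each element of U is included
  independently with probability p.\<close>
definition hprob :: "'a set \<Rightarrow> real \<Rightarrow> 'a set \<Rightarrow> real" where
  "hprob U p H = p ^ card H * (1 - p) ^ card (U - H)"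

definition expect :: "'a set \<Rightarrow> real \<Rightarrow> ('a set \<Rightarrow> real) \<Rightarrow> real" where
  "expect U p X = (\<Sum>H\<in>Pow U. hprob U p H * X H)"

definition violated_removed :: "'a set set \<Rightarrow> ('a set \<Rightarrow> nat) \<Rightarrow> 'a set \<Rightarrow> 'a set" where
  "violated_removed F \<mu> N = N - \<Union>{N \<inter> B | B. B \<in> F \<and> card (N \<inter> B) > \<mu> B}"

end

theory Submission
  imports Defs
begin


lemma hprob_ins:
  assumes "finite U" "e \<in> U" "H \<subseteq> U - {e}"
  shows "hprob U p (insert e H) = p * hprob (U - {e}) p H"
proof -
  have fH: "finite H" using assms by (meson finite_Diff finite_subset)
  have "e \<notin> H" using assms by auto
  hence "card (insert e H) = Suc (card H)" using fH by simp
  moreover have "U - insert e H = (U - {e}) - H" by auto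
  ultimately show ?thesis unfolding hprob_def by simp
qed

lemma hprob_noins:
  assumes "finite U" "e \<in> U" "H \<subseteq> U - {e}"
  shows "hprob U p H = (1 - p) * hprob (U - {e}) p H"
proof -
  have "U - H = insert e ((U - {e}) - H)" using assms by auto
  moreover have "e \<notin> (U - {e}) - H" by auto
  moreover have "finite ((U - {e}) - H)" using assms by auto
  ultimately have "card (U - H) = Suc (card ((U - {e}) - H))" by simp
  thus ?thesis unfolding hprob_def by simp
qed

lemma expect_decomp:
  assumes fin: "finite U" and e: "e \<in> U"
  shows "expect U p X = p * (\<Sum>H\<in>Pow (U - {e}). hprob (U - {e}) p H * X (insert e H))
     + (1 - p) * (\<Sum>H\<in>Pow (U - {e}). hprob (U - {e}) p H * X H)"
proof -
  let ?A = "U - {e}"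
  have U: "U = insert e ?A" using e by auto
  have P: "Pow U = Pow ?A \<union> insert e ` Pow ?A" by (subst U, rule Pow_insert)
  have disj: "Pow ?A \<inter> insert e ` Pow ?A = {}" by auto
  have fA: "finite (Pow ?A)" using fin by simp
  have inj: "inj_on (insert e) (Pow ?A)" unfolding inj_on_def by blast
  have "expect U p X = (\<Sum>H\<in>Pow ?A. hprob U p H * X H) + (\<Sum>H\<in>insert e ` Pow ?A. hprob U p H * X H)"
    unfolding expect_def P by (rule sum.union_disjoint) (use fA disj in auto)
  also have "(\<Sum>H\<in>insert e ` Pow ?A. hprob U p H * X H) = (\<Sum>H\<in>Pow ?A. hprob U p (insert e H) * X (insert e H))"
    by (subst sum.reindex[OF inj]) simp
  also have "\<dots> = p * (\<Sum>H\<in>Pow ?A. hprob ?A p H * X (insert e H))"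
    unfolding sum_distrib_left
    by (rule sum.cong) (use hprob_ins[OF fin e] in auto)
  also have "(\<Sum>H\<in>Pow ?A. hprob U p H * X H) = (1 - p) * (\<Sum>H\<in>Pow ?A. hprob ?A p H * X H)"
    unfolding sum_distrib_left
    by (rule sum.cong) (use hprob_noins[OF fin e] in auto)
  finally show ?thesis by simp
qed

lemma sum_hprob: "finite U \<Longrightarrow> (\<Sum>H\<in>Pow U. hprob U p H) = 1"
proof (induction U rule: finite_induct)
  case empty thus ?case by (simp add: hprob_def)
next
  case (insert e A)
  have "expect (insert e A) p (\<lambda>_. 1) = p * (\<Sum>H\<in>Pow A. hprob A p H) + (1-p) * (\<Sum>H\<in>Pow A. hprob A p H)"
    using expect_decomp[of "insert e A" e p "\<lambda>_. 1"] insert by simp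
  thus ?case using insert by (simp add: expect_def)
qed

lemma hprob_nonneg: "0 \<le> p \<Longrightarrow> p \<le> 1 \<Longrightarrow> 0 \<le> hprob U p H"
  unfolding hprob_def by simp

lemma expect_const: "finite U \<Longrightarrow> expect U p (\<lambda>_. c) = c"
  unfolding expect_def using sum_hprob[of U p] by (simp add: sum_distrib_right[symmetric])

lemma expect_mono: "0 \<le> p \<Longrightarrow> p \<le> 1 \<Longrightarrow> (\<And>H. H \<subseteq> U \<Longrightarrow> X H \<le> Y H) \<Longrightarrow> expect U p X \<le> expect U p Y"
  unfolding expect_def by (rule sum_mono) (auto intro: mult_left_mono hprob_nonneg)

lemma sum_Union_le:
  fixes g :: "'a \<Rightarrow> real"
  assumes "finite V" "\<forall>X\<in>V. finite X" "\<forall>X\<in>V. \<forall>x\<in>X. 0 \<le> g x"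
  shows "sum g (\<Union>V) \<le> (\<Sum>X\<in>V. sum g X)"
  using assms
proof (induction V rule: finite_induct)
  case empty thus ?case by simp
next
  case (insert X V)
  have "sum g (\<Union>(insert X V)) = sum g (X \<union> \<Union>V)" by simp
  also have "\<dots> \<le> sum g X + sum g (\<Union>V)"
    using insert by (subst sum_Un) (auto intro!: sum_nonneg)
  also have "\<dots> \<le> sum g X + (\<Sum>X\<in>V. sum g X)" using insert by simp
  finally show ?case using insert by simp
qed



lemma G_super:
  fixes q :: real and n m mu :: nat
  assumes q: "0 \<le> q" "q \<le> 1/4" and m: "m < mu" and n: "1 \<le> n"
  shows "(1-q) * (real n * (4*q)^(mu+1-n) * 2^(mu - (m+1))) + q * (real (n+1) * (4*q)^(mu+1-(n+1)) * 2^(mu-m))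
     \<le> real n * (4*q)^(mu+1-n) * 2^(mu-m)"
proof -
  obtain r where r: "mu - m = Suc r" "mu - (m+1) = r" using m by (metis Suc_diff_Suc Suc_eq_plus1 diff_diff_left)
  show ?thesis
  proof (cases "n \<le> mu")
    case True
    then obtain d where d: "mu + 1 - n = Suc d" "mu + 1 - (n+1) = d" by (metis Suc_diff_le Suc_eq_plus1 diff_Suc_Suc)
    define K where "K = (4*q)^d * 2^r"
    have K: "0 \<le> K" unfolding K_def using q by simp
    have key: "(1-q)*real n*4*q + q*(real n+1)*2 \<le> 8*q*real n"
    proof -
      have "0 \<le> q * (real n - 1)" using q n by simp
      moreover have "0 \<le> q*q*real n" using q by simp
      ultimately show ?thesis by (simp add: algebra_simps)
    qed
    have "(1-q) * (real n * (4*q)^(Suc d) * 2^r) + q * (real (n+1) * (4*q)^d * 2^(Suc r))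
        = K * ((1-q)*real n*4*q + q*(real n+1)*2)" unfolding K_def by (simp add: algebra_simps)
    also have "\<dots> \<le> K * (8*q*real n)" using key K q by (intro mult_left_mono) auto
    also have "\<dots> = real n * (4*q)^(Suc d) * 2^(Suc r)" unfolding K_def by (simp add: algebra_simps)
    finally show ?thesis using d r by simp
  next
    case False
    hence d: "mu + 1 - n = 0" "mu + 1 - (n+1) = 0" by auto
    have "(1-q) * real n + q * (real n + 1) * 2 \<le> real n * 2"
    proof -
      have "q * (real n + 2) \<le> (1/4) * (real n + 2)" using q by (intro mult_right_mono) auto
      thus ?thesis using n by (simp add: algebra_simps)
    qed
    hence "((1-q) * real n + q * (real n + 1) * 2) * 2^r \<le> (real n * 2) * 2^r"
      by (intro mult_right_mono) auto
    thus ?thesis using d r by (simp add: algebra_simps)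
  qed
qed

lemma geom_le:
  fixes x :: real assumes "0 \<le> x" "x < 1"
  shows "(\<Sum>k\<in>{1..n}. x^k) \<le> x / (1 - x)"
proof -
  have eq: "(1-x) * (\<Sum>k\<in>{1..n}. x^k) = x - x^(Suc n)" for n
  proof (induction n)
    case 0 thus ?case by simp
  next
    case (Suc n)
    have "{1..Suc n} = insert (Suc n) {1..n}" by auto
    hence "(\<Sum>k\<in>{1..Suc n}. x^k) = x^Suc n + (\<Sum>k\<in>{1..n}. x^k)" by simp
    hence "(1-x) * (\<Sum>k\<in>{1..Suc n}. x^k) = (1-x)*x^Suc n + (1-x) * (\<Sum>k\<in>{1..n}. x^k)"
      by (simp add: algebra_simps)
    also have "\<dots> = (1-x)*x^Suc n + (x - x^Suc n)" using Suc by simp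
    also have "\<dots> = x - x^Suc (Suc n)" by (simp add: algebra_simps)
    finally show ?case .
  qed
  have "(1-x) * (\<Sum>k\<in>{1..n}. x^k) \<le> x" using eq[of n] assms by simp
  thus ?thesis using assms by (simp add: pos_le_divide_eq mult.commute)
qed



locale lsim =
  fixes U :: "'a set" and F :: "'a set set" and \<mu> :: "'a set \<Rightarrow> nat"
    and f :: "'a set \<Rightarrow> real" and p :: real
    and sel :: "'a set \<Rightarrow> 'a set \<Rightarrow> 'a set \<Rightarrow> 'a"
  assumes finU: "finite U"
    and FU: "\<forall>B\<in>F. B \<subseteq> U"
    and lam: "laminar F"
    and mu_pos: "\<forall>B\<in>F. \<mu> B > 0"
    and mu_strict: "\<forall>B\<in>F. \<forall>B'\<in>F. B \<subset> B' \<longrightarrow> \<mu> B < \<mu> B'"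
    and f_mono: "\<forall>S T. S \<subseteq> T \<longrightarrow> T \<subseteq> U \<longrightarrow> f S \<le> f T"
    and f_sub: "submodular_on U f"
    and p0: "0 < p" and p1: "p < 1"
    and sel: "\<forall>M N C. C \<noteq> {} \<longrightarrow> sel M N C \<in> C"
begin

abbreviation "I \<equiv> lam_indep U F \<mu>"
abbreviation "step H \<equiv> sim_step U I f sel H"

definition Cand where "Cand M N = {e \<in> U - (M \<union> N). insert e M \<in> I}"
definition Cmax where "Cmax M N = {e \<in> Cand M N. \<forall>e'\<in>Cand M N. marg f M e' \<le> marg f M e}"

lemma finF: "finite F"
  using FU finU by (meson PowI finite_Pow_iff rev_finite_subset subsetI)

lemma step_unf: "step H (M,N,w) = (if Cand M N = {} then (M,N,w) else
    (if sel M N (Cmax M N) \<in> H then (insert (sel M N (Cmax M N)) M, N, w(sel M N (Cmax M N) := marg f M (sel M N (Cmax M N))))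
    else (M, insert (sel M N (Cmax M N)) N, w(sel M N (Cmax M N) := marg f M (sel M N (Cmax M N))))))"
  unfolding sim_step_def prod.case Cand_def[symmetric] Let_def Cmax_def[symmetric] by (rule refl)

lemma step_empty: "Cand M N = {} \<Longrightarrow> step H (M,N,w) = (M,N,w)"
  by (subst step_unf) simp

lemma step_ne: "Cand M N \<noteq> {} \<Longrightarrow> step H (M,N,w) =
   (if sel M N (Cmax M N) \<in> H then (insert (sel M N (Cmax M N)) M, N, w(sel M N (Cmax M N) := marg f M (sel M N (Cmax M N))))
    else (M, insert (sel M N (Cmax M N)) N, w(sel M N (Cmax M N) := marg f M (sel M N (Cmax M N)))))"
  by (subst step_unf) simp

lemma Cmax_ne: assumes ne: "Cand M N \<noteq> {}" shows "Cmax M N \<noteq> {}"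
proof -
  have fin: "finite (Cand M N)" unfolding Cand_def using finU by simp
  let ?m = "Max (marg f M ` Cand M N)"
  have "?m \<in> marg f M ` Cand M N" by (rule Max_in) (use fin ne in auto)
  then obtain e where e1: "?m = marg f M e" "e \<in> Cand M N" by (rule imageE)
  have "marg f M e' \<le> ?m" if "e' \<in> Cand M N" for e' by (rule Max_ge) (use fin that in auto)
  hence e: "e \<in> Cand M N" "\<forall>e'\<in>Cand M N. marg f M e' \<le> marg f M e" using e1 by auto
  thus ?thesis unfolding Cmax_def by auto
qed

lemma sel_in: "Cand M N \<noteq> {} \<Longrightarrow> sel M N (Cmax M N) \<in> Cmax M N"
proof -
  assume "Cand M N \<noteq> {}"
  hence "Cmax M N \<noteq> {}" by (rule Cmax_ne)
  thus ?thesis using sel by simp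
qed

lemma lam_down: assumes T: "T \<in> I" and ST: "S \<subseteq> T" shows "S \<in> I"
proof -
  have TU: "T \<subseteq> U" and c: "\<forall>B\<in>F. card (T \<inter> B) \<le> \<mu> B" using T unfolding lam_indep_def by auto
  have fT: "finite T" using TU finU by (rule finite_subset)
  have "\<forall>B\<in>F. card (S \<inter> B) \<le> \<mu> B"
  proof
    fix B assume B: "B \<in> F"
    have "card (S \<inter> B) \<le> card (T \<inter> B)" using ST fT by (intro card_mono) auto
    thus "card (S \<inter> B) \<le> \<mu> B" using c B by (meson le_trans)
  qed
  moreover have "S \<subseteq> U" using ST TU by simp
  ultimately show ?thesis unfolding lam_indep_def by simp
qed

lemma submod_marg:
  assumes "M \<subseteq> U" "e \<in> U" "z \<in> U" "e \<notin> M" "z \<notin> M" "z \<noteq> e"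
  shows "marg f (insert e M) z \<le> marg f M z"
proof -
  have "f (insert e M \<union> insert z M) + f (insert e M \<inter> insert z M) \<le> f (insert e M) + f (insert z M)"
    using f_sub[unfolded submodular_on_def, rule_format, of "insert e M" "insert z M"] assms by simp
  moreover have "insert e M \<union> insert z M = insert z (insert e M)" by auto
  moreover have "insert e M \<inter> insert z M = M" using assms by auto
  ultimately show ?thesis unfolding marg_def by simp
qed

lemma marg_nonneg: "insert z M \<subseteq> U \<Longrightarrow> 0 \<le> marg f M z"
  unfolding marg_def using f_mono[rule_format, of M "insert z M"] by auto

definition Inv where
  "Inv s = (case s of (M,N,w) \<Rightarrow> M \<in> I \<and> N \<subseteq> U \<and> M \<inter> N = {} \<and> (\<forall>y\<in>N. 0 \<le> w y)
      \<and> (\<forall>y\<in>N. \<forall>z\<in>Cand M N. marg f M z \<le> w y))"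

definition seen where "seen s = (case s of (M,N,w) \<Rightarrow> M \<union> N)"

lemma I_sub: "M \<in> I \<Longrightarrow> M \<subseteq> U" unfolding lam_indep_def by auto

lemma Inv_s1:
  assumes inv: "Inv (M,N,w)" and ne: "Cand M N \<noteq> {}" and e: "e = sel M N (Cmax M N)"
  shows "Inv (insert e M, N, w(e := marg f M e))"
proof -
  have eC: "e \<in> Cand M N" using sel_in[OF ne] e unfolding Cmax_def by auto
  hence eU: "e \<in> U" "e \<notin> M" "e \<notin> N" "insert e M \<in> I" unfolding Cand_def by auto
  have MU: "M \<subseteq> U" using inv I_sub unfolding Inv_def by auto
  have sub: "Cand (insert e M) N \<subseteq> Cand M N - {e}"
  proof
    fix x assume x: "x \<in> Cand (insert e M) N"
    hence "insert x M \<in> I" unfolding Cand_def by (auto intro: lam_down[of "insert x (insert e M)"])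
    thus "x \<in> Cand M N - {e}" using x unfolding Cand_def by auto
  qed
  have b: "\<forall>y\<in>N. \<forall>z\<in>Cand (insert e M) N. marg f (insert e M) z \<le> (w(e := marg f M e)) y"
  proof (intro ballI)
    fix y z assume y: "y \<in> N" and z: "z \<in> Cand (insert e M) N"
    have z': "z \<in> Cand M N" "z \<noteq> e" using z sub by auto
    have "marg f (insert e M) z \<le> marg f M z"
      using z' eU MU by (intro submod_marg) (auto simp: Cand_def)
    also have "\<dots> \<le> w y" using inv y z' unfolding Inv_def by auto
    finally show "marg f (insert e M) z \<le> (w(e := marg f M e)) y" using y eU by auto
  qed
  have c: "\<forall>y\<in>N. 0 \<le> w y" "N \<subseteq> U" "M \<inter> N = {}" using inv unfolding Inv_def by auto
  have d: "\<forall>y\<in>N. 0 \<le> (w(e := marg f M e)) y" using c eU by auto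
  show ?thesis unfolding Inv_def using b c d eU by auto
qed

lemma Inv_s2:
  assumes inv: "Inv (M,N,w)" and ne: "Cand M N \<noteq> {}" and e: "e = sel M N (Cmax M N)"
  shows "Inv (M, insert e N, w(e := marg f M e))"
proof -
  have eX: "e \<in> Cmax M N" using sel_in[OF ne] e by auto
  have eC: "e \<in> Cand M N" using eX unfolding Cmax_def by auto
  hence eU: "e \<in> U" "e \<notin> M" "e \<notin> N" "insert e M \<in> I" unfolding Cand_def by auto
  have sub: "Cand M (insert e N) \<subseteq> Cand M N"
    unfolding Cand_def by auto
  have mn: "0 \<le> marg f M e" using eU I_sub by (intro marg_nonneg) auto
  have a: "\<forall>z\<in>Cand M (insert e N). marg f M z \<le> marg f M e"
    using eX sub unfolding Cmax_def by auto
  have b: "\<forall>y\<in>N. \<forall>z\<in>Cand M (insert e N). marg f M z \<le> w y"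
    using inv sub unfolding Inv_def by auto
  have c: "\<forall>y\<in>N. 0 \<le> w y" "M \<in> I" "N \<subseteq> U" "M \<inter> N = {}" using inv unfolding Inv_def by auto
  show ?thesis unfolding Inv_def using mn a b c eU by auto
qed

lemma Inv_step: "Inv s \<Longrightarrow> Inv (step H s)"
proof -
  assume inv: "Inv s"
  obtain M N w where s: "s = (M,N,w)" by (cases s)
  show ?thesis
  proof (cases "Cand M N = {}")
    case True thus ?thesis using inv s step_empty by simp
  next
    case False thus ?thesis using inv s step_ne[OF False] Inv_s1 Inv_s2 by auto
  qed
qed

lemma Inv_funpow: "Inv s \<Longrightarrow> Inv ((step H ^^ k) s)"
  by (induction k) (auto intro: Inv_step)

lemma step_agree:
  assumes "\<forall>z\<in>U - seen s. (z \<in> H) = (z \<in> H')"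
  shows "step H s = step H' s"
proof -
  obtain M N w where s: "s = (M,N,w)" by (cases s)
  show ?thesis
  proof (cases "Cand M N = {}")
    case True thus ?thesis using s step_empty by simp
  next
    case False
    have "sel M N (Cmax M N) \<in> U - seen s" using sel_in[OF False] s
      unfolding Cmax_def Cand_def seen_def by auto
    hence "(sel M N (Cmax M N) \<in> H) = (sel M N (Cmax M N) \<in> H')" using assms by auto
    thus ?thesis using s step_ne[OF False] by simp
  qed
qed

lemma seen_mono: "seen s \<subseteq> seen (step H s)"
proof -
  obtain M N w where s: "s = (M,N,w)" by (cases s)
  show ?thesis
  proof (cases "Cand M N = {}")
    case True thus ?thesis using s step_empty by simp
  next
    case False thus ?thesis using s step_ne[OF False] unfolding seen_def by auto
  qed
qed

lemma funpow_agree: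
  "e \<in> seen s \<Longrightarrow> (\<forall>z. z \<noteq> e \<longrightarrow> (z \<in> H) = (z \<in> H')) \<Longrightarrow> (step H ^^ k) s = (step H' ^^ k) s"
proof (induction k arbitrary: s)
  case 0 thus ?case by simp
next
  case (Suc k)
  have "step H s = step H' s" using Suc.prems by (intro step_agree) auto
  moreover have "e \<in> seen (step H s)" using Suc.prems seen_mono by blast
  ultimately show ?case using Suc by (simp add: funpow_Suc_right del: funpow.simps)
qed

end



locale lsim2 = lsim + assumes small: "8 * (1 - p) < 1"
begin

definition "xx = 8 * (1 - p)"
definition "cP = xx / (1 - xx)"
definition G where "G B M N = real (card (N \<inter> B)) * (4*(1-p))^(\<mu> B + 1 - card (N \<inter> B)) * 2^(\<mu> B - card (M \<inter> B))"
definition A where "A B N w = Max (w ` (N \<inter> B))"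
definition Pot where "Pot s = (case s of (M,N,w) \<Rightarrow> cP * sum w N - (\<Sum>B\<in>F. A B N w * G B M N))"

lemma xx: "0 \<le> xx" "xx < 1" unfolding xx_def using p1 small by auto

lemma chain_sum: "(\<Sum>B\<in>{B\<in>F. e \<in> B}. xx ^ \<mu> B) \<le> cP"
proof -
  let ?Fe = "{B\<in>F. e \<in> B}"
  have finFe: "finite ?Fe" using finF by simp
  have inj: "inj_on \<mu> ?Fe"
  proof (rule inj_onI)
    fix B B' assume B: "B \<in> ?Fe" and B': "B' \<in> ?Fe" and eq: "\<mu> B = \<mu> B'"
    have "B \<inter> B' \<noteq> {}" using B B' by auto
    hence "B \<subseteq> B' \<or> B' \<subseteq> B" using lam B B' unfolding laminar_def by blast
    thus "B = B'" using mu_strict B B' eq by (metis (no_types, lifting) mem_Collect_eq nat_neq_iff psubsetI)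
  qed
  have eq: "(\<Sum>B\<in>?Fe. xx ^ \<mu> B) = (\<Sum>k\<in>\<mu> ` ?Fe. xx ^ k)" by (simp add: sum.reindex[OF inj])
  obtain n where n: "\<forall>k\<in>\<mu> ` ?Fe. k \<le> n"
    using finite_nat_set_iff_bounded_le finFe by blast
  have sub: "\<mu> ` ?Fe \<subseteq> {1..n}" using n mu_pos by force
  have "(\<Sum>k\<in>\<mu> ` ?Fe. xx ^ k) \<le> (\<Sum>k\<in>{1..n}. xx ^ k)"
    by (rule sum_mono2) (use sub xx in auto)
  also have "\<dots> \<le> cP" unfolding cP_def using geom_le xx by blast
  finally show ?thesis using eq by simp
qed

lemma term_bound:
  assumes inv: "Inv (M,N,w)" and ne: "Cand M N \<noteq> {}" and e: "e = sel M N (Cmax M N)"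
    and v: "v = marg f M e" and B: "B \<in> F"
  shows "p * (A B N (w(e:=v)) * G B (insert e M) N) + (1-p) * (A B (insert e N) (w(e:=v)) * G B M (insert e N))
          - A B N w * G B M N \<le> (if e \<in> B then (1-p) * v * xx ^ \<mu> B else 0)"
proof -
  have eX: "e \<in> Cmax M N" using sel_in[OF ne] e by auto
  have eC: "e \<in> Cand M N" using eX unfolding Cmax_def by auto
  hence eU: "e \<in> U" "e \<notin> M" "e \<notin> N" "insert e M \<in> I" unfolding Cand_def by auto
  have MU: "M \<subseteq> U" and NU: "N \<subseteq> U" using inv I_sub unfolding Inv_def by auto
  have fM: "finite M" "finite N" using MU NU finU finite_subset by auto
  have vge: "0 \<le> v" unfolding v using eU I_sub by (intro marg_nonneg) auto
  have wle: "\<forall>y\<in>N. v \<le> w y" "\<forall>y\<in>N. 0 \<le> w y" using inv eC v unfolding Inv_def by auto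
  have A1: "A B N (w(e:=v)) = A B N w"
  proof -
    have "(w(e:=v)) ` (N \<inter> B) = w ` (N \<inter> B)" using eU by (intro image_cong) auto
    thus ?thesis unfolding A_def by simp
  qed
  have q: "0 \<le> 1 - p" "1 - p \<le> 1/4" using p1 small by auto
  show ?thesis
  proof (cases "e \<in> B")
    case False
    hence "insert e M \<inter> B = M \<inter> B" "insert e N \<inter> B = N \<inter> B" by auto
    hence "G B (insert e M) N = G B M N" "G B M (insert e N) = G B M N" "A B (insert e N) (w(e:=v)) = A B N w"
      using A1 unfolding G_def A_def by auto
    thus ?thesis using A1 False by (simp add: algebra_simps)
  next
    case True
    have mlt: "card (M \<inter> B) < \<mu> B"
    proof -
      have "card (insert e M \<inter> B) \<le> \<mu> B" using eU(4) B unfolding lam_indep_def by auto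
      moreover have "insert e M \<inter> B = insert e (M \<inter> B)" using True by auto
      moreover have "card (insert e (M \<inter> B)) = Suc (card (M \<inter> B))" using fM eU by simp
      ultimately show ?thesis by simp
    qed
    have cM: "card (insert e M \<inter> B) = card (M \<inter> B) + 1"
    proof -
      have "insert e M \<inter> B = insert e (M \<inter> B)" using True by auto
      thus ?thesis using fM eU by simp
    qed
    have NB: "insert e N \<inter> B = insert e (N \<inter> B)" using True by auto
    have cN: "card (insert e N \<inter> B) = card (N \<inter> B) + 1" using NB fM eU by simp
    show ?thesis
    proof (cases "N \<inter> B = {}")
      case True2: True
      have G0: "G B M N = 0" "G B (insert e M) N = 0" unfolding G_def using True2 by auto
      have Ae: "A B (insert e N) (w(e:=v)) = v" unfolding A_def NB True2 by simp
      have "G B M (insert e N) = (4*(1-p))^(\<mu> B) * 2^(\<mu> B - card (M \<inter> B))"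
        unfolding G_def using cN True2 by simp
      also have "\<dots> \<le> (4*(1-p))^(\<mu> B) * 2^(\<mu> B)"
        using q by (intro mult_left_mono power_increasing) auto
      also have "\<dots> = xx ^ \<mu> B" unfolding xx_def by (simp add: power_mult_distrib[symmetric])
      finally have "G B M (insert e N) \<le> xx ^ \<mu> B" .
      hence "(1-p) * (v * G B M (insert e N)) \<le> (1-p) * (v * xx ^ \<mu> B)"
        using q vge by (intro mult_left_mono) auto
      thus ?thesis using G0 Ae True by (simp add: algebra_simps)
    next
      case False2: False
      then obtain y where y: "y \<in> N \<inter> B" by auto
      have fNB: "finite (N \<inter> B)" using fM by simp
      have Age: "w y \<le> A B N w" unfolding A_def using fNB y by (intro Max_ge) auto
      have A0: "0 \<le> A B N w" using Age wle y by force
      have vA: "v \<le> A B N w" using Age wle y by force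
      have A2: "A B (insert e N) (w(e:=v)) = A B N w"
      proof -
        have "(w(e:=v)) ` insert e (N \<inter> B) = insert v (w ` (N \<inter> B))"
          using eU by (auto simp: image_iff)
        hence "A B (insert e N) (w(e:=v)) = Max (insert v (w ` (N \<inter> B)))" unfolding A_def NB by simp
        also have "\<dots> = max v (A B N w)" unfolding A_def using fNB False2 by simp
        finally show ?thesis using vA by simp
      qed
      have n1: "1 \<le> card (N \<inter> B)" using fNB False2 by (simp add: Suc_le_eq card_gt_0_iff)
      have sup: "p * G B (insert e M) N + (1-p) * G B M (insert e N) \<le> G B M N"
        using G_super[OF q mlt n1] unfolding G_def cM cN by simp
      have "p * (A B N w * G B (insert e M) N) + (1-p) * (A B N w * G B M (insert e N)) - A B N w * G B M N
          = A B N w * (p * G B (insert e M) N + (1-p) * G B M (insert e N) - G B M N)"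
        by (simp add: algebra_simps)
      also have "\<dots> \<le> 0" using A0 sup by (simp add: mult_nonneg_nonpos)
      moreover have "0 \<le> (1 - p) * v * xx ^ \<mu> B" using vge q xx by simp
      ultimately show ?thesis using A1 A2 True by simp
    qed
  qed
qed

end


context lsim2 begin

lemma Pot_step:
  assumes inv: "Inv (M,N,w)" and ne: "Cand M N \<noteq> {}" and e: "e = sel M N (Cmax M N)"
    and v: "v = marg f M e"
  shows "Pot (M,N,w) \<le> p * Pot (insert e M, N, w(e:=v)) + (1-p) * Pot (M, insert e N, w(e:=v))"
proof -
  have eX: "e \<in> Cmax M N" using sel_in[OF ne] e by auto
  have eC: "e \<in> Cand M N" using eX unfolding Cmax_def by auto
  hence eU: "e \<in> U" "e \<notin> M" "e \<notin> N" "insert e M \<in> I" unfolding Cand_def by auto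
  have NU: "N \<subseteq> U" using inv unfolding Inv_def by auto
  have fN: "finite N" using NU finU finite_subset by auto
  have vge: "0 \<le> v" unfolding v using eU I_sub by (intro marg_nonneg) auto
  have s1: "sum (w(e:=v)) N = sum w N" using eU by (intro sum.cong) auto
  have s2: "sum (w(e:=v)) (insert e N) = v + sum w N" using eU fN s1 by simp
  define T where "T B = p * (A B N (w(e:=v)) * G B (insert e M) N) + (1-p) * (A B (insert e N) (w(e:=v)) * G B M (insert e N))
          - A B N w * G B M N" for B
  have "(\<Sum>B\<in>F. T B) \<le> (\<Sum>B\<in>F. if e \<in> B then (1-p) * v * xx ^ \<mu> B else 0)"
    unfolding T_def by (rule sum_mono) (rule term_bound[OF inv ne e v], simp)
  also have "\<dots> = (1-p) * v * (\<Sum>B\<in>{B\<in>F. e \<in> B}. xx ^ \<mu> B)"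
    using finF by (simp add: sum.inter_filter sum_distrib_left if_distrib cong: if_cong)
  also have "\<dots> \<le> (1-p) * v * cP" using chain_sum vge p1 by (intro mult_left_mono) auto
  finally have ST: "(\<Sum>B\<in>F. T B) \<le> (1-p) * v * cP" .
  have "(\<Sum>B\<in>F. T B) = p * (\<Sum>B\<in>F. A B N (w(e:=v)) * G B (insert e M) N)
      + (1-p) * (\<Sum>B\<in>F. A B (insert e N) (w(e:=v)) * G B M (insert e N)) - (\<Sum>B\<in>F. A B N w * G B M N)"
    unfolding T_def by (simp add: sum.distrib sum_subtractf sum_distrib_left)
  thus ?thesis using ST unfolding Pot_def using s1 s2 by (simp add: algebra_simps)
qed

lemma Pot_le_value:
  assumes inv: "Inv (M,N,w)" and c: "cP \<le> cT"
  shows "Pot (M,N,w) \<le> sum w (violated_removed F \<mu> N) - (1 - cT) * sum w N"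
proof -
  have NU: "N \<subseteq> U" and wn: "\<forall>y\<in>N. 0 \<le> w y" using inv unfolding Inv_def by auto
  have fN: "finite N" using NU finU finite_subset by auto
  let ?V = "{B\<in>F. card (N \<inter> B) > \<mu> B}"
  let ?X = "\<Union>{N \<inter> B | B. B \<in> F \<and> card (N \<inter> B) > \<mu> B}"
  have Xeq: "{N \<inter> B | B. B \<in> F \<and> card (N \<inter> B) > \<mu> B} = (\<lambda>B. N \<inter> B) ` ?V" by auto
  have XN: "?X \<subseteq> N" by auto
  have fX: "finite ?X" using XN fN by (rule finite_subset)
  have d: "sum w (violated_removed F \<mu> N) = sum w N - sum w ?X"
    unfolding violated_removed_def using sum_diff[OF fN XN] by simp
  have "sum w ?X \<le> (\<Sum>Y\<in>(\<lambda>B. N \<inter> B) ` ?V. sum w Y)"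
    unfolding Xeq using finF wn fN by (intro sum_Union_le) auto
  also have "\<dots> \<le> (\<Sum>B\<in>?V. sum w (N \<inter> B))"
    using sum_image_le[of ?V "\<lambda>Y. sum w Y" "\<lambda>B. N \<inter> B"] finF wn by (auto intro!: sum_nonneg)
  also have "\<dots> \<le> (\<Sum>B\<in>?V. A B N w * G B M N)"
  proof (rule sum_mono)
    fix B assume B: "B \<in> ?V"
    have fNB: "finite (N \<inter> B)" using fN by simp
    have "sum w (N \<inter> B) \<le> real (card (N \<inter> B)) * A B N w"
      unfolding A_def using fNB by (intro sum_bounded_above Max_ge) auto
    also have "\<dots> \<le> G B M N * A B N w"
    proof (rule mult_right_mono)
      have "\<mu> B + 1 - card (N \<inter> B) = 0" using B by auto
      hence "G B M N = real (card (N \<inter> B)) * 2^(\<mu> B - card (M \<inter> B))" unfolding G_def by simp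
      moreover have "(1::real) \<le> 2^(\<mu> B - card (M \<inter> B))" by simp
      ultimately show "real (card (N \<inter> B)) \<le> G B M N" by (simp add: mult_le_cancel_left1)
      have "N \<inter> B \<noteq> {}" using B by auto
      then obtain y where "y \<in> N \<inter> B" by auto
      hence "w y \<le> A B N w" "0 \<le> w y" unfolding A_def using fNB wn by (auto intro: Max_ge)
      thus "0 \<le> A B N w" by linarith
    qed
    finally show "sum w (N \<inter> B) \<le> A B N w * G B M N" by (simp add: mult.commute)
  qed
  also have "\<dots> \<le> (\<Sum>B\<in>F. A B N w * G B M N)"
  proof (rule sum_mono2)
    show "finite F" by (rule finF)
    show "?V \<subseteq> F" by auto
    show "0 \<le> A B N w * G B M N" if "B \<in> F - ?V" for B
    proof (cases "N \<inter> B = {}")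
      case True thus ?thesis unfolding G_def by simp
    next
      case False
      then obtain y where y: "y \<in> N \<inter> B" by auto
      hence "w y \<le> A B N w" "0 \<le> w y" unfolding A_def using fN wn by (auto intro: Max_ge)
      moreover have "0 \<le> G B M N" unfolding G_def using p1 by simp
      ultimately show ?thesis by simp
    qed
  qed
  finally have X: "sum w ?X \<le> (\<Sum>B\<in>F. A B N w * G B M N)" .
  have "0 \<le> sum w N" using wn by (simp add: sum_nonneg)
  hence "cP * sum w N \<le> cT * sum w N" using c by (simp add: mult_right_mono)
  thus ?thesis unfolding Pot_def using d X by (simp add: algebra_simps)
qed

end


lemma expect_lin: "expect U p (\<lambda>H. a H - c * b H) = expect U p a - c * expect U p b"
  unfolding expect_def by (simp add: sum_subtractf sum_distrib_left algebra_simps)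

context lsim2 begin

lemma super: "\<forall>s. Inv s \<longrightarrow> Pot s \<le> expect U p (\<lambda>H. Pot ((step H ^^ k) s))"
proof (induction k)
  case 0 thus ?case using expect_const[OF finU] by simp
next
  case (Suc k)
  show ?case
  proof (intro allI impI)
    fix s assume inv: "Inv s"
    obtain M N w where s: "s = (M,N,w)" by (cases s)
    show "Pot s \<le> expect U p (\<lambda>H. Pot ((step H ^^ Suc k) s))"
    proof (cases "Cand M N = {}")
      case True
      have "(step H ^^ Suc k) s = (step H ^^ k) s" for H
        by (simp only: funpow_Suc_right o_apply s step_empty[OF True])
      thus ?thesis using Suc.IH[rule_format, OF inv] by simp
    next
      case False
      define e where "e = sel M N (Cmax M N)"
      define v where "v = marg f M e"
      define s1 where "s1 = (insert e M, N, w(e:=v))"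
      define s2 where "s2 = (M, insert e N, w(e:=v))"
      have eX: "e \<in> Cmax M N" using sel_in[OF False] e_def by auto
      have eC: "e \<in> Cand M N" using eX unfolding Cmax_def by auto
      hence eU: "e \<in> U" "e \<notin> M" "e \<notin> N" unfolding Cand_def by auto
      have inv1: "Inv s1" unfolding s1_def v_def using Inv_s1[OF _ False e_def] inv s by simp
      have inv2: "Inv s2" unfolding s2_def v_def using Inv_s2[OF _ False e_def] inv s by simp
      define Y1 where "Y1 H = Pot ((step H ^^ k) s1)" for H
      define Y2 where "Y2 H = Pot ((step H ^^ k) s2)" for H
      have X: "Pot ((step H ^^ Suc k) s) = (if e \<in> H then Y1 H else Y2 H)" for H
      proof -
        have "(step H ^^ Suc k) s = (step H ^^ k) (step H s)" by (simp only: funpow_Suc_right o_apply)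
        also have "step H s = (if e \<in> H then s1 else s2)"
          using s step_ne[OF False] unfolding s1_def s2_def e_def v_def by simp
        finally show ?thesis unfolding Y1_def Y2_def by simp
      qed
      have ag: "\<forall>z. z \<noteq> e \<longrightarrow> (z \<in> insert e H) = (z \<in> H)" for H by auto
      have Y1i: "Y1 (insert e H) = Y1 H" for H
        unfolding Y1_def using funpow_agree[of e s1 "insert e H" H k] ag unfolding seen_def s1_def by simp
      have Y2i: "Y2 (insert e H) = Y2 H" for H
        unfolding Y2_def using funpow_agree[of e s2 "insert e H" H k] ag unfolding seen_def s2_def by simp
      let ?S = "\<lambda>Z. (\<Sum>H\<in>Pow (U - {e}). hprob (U - {e}) p H * Z H)"
      have E1: "expect U p Y1 = ?S Y1" using expect_decomp[OF finU eU(1), of p Y1] Y1i by (simp add: algebra_simps)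
      have E2: "expect U p Y2 = ?S Y2" using expect_decomp[OF finU eU(1), of p Y2] Y2i by (simp add: algebra_simps)
      have "expect U p (\<lambda>H. Pot ((step H ^^ Suc k) s)) =
          p * ?S (\<lambda>H. Pot ((step (insert e H) ^^ Suc k) s)) + (1-p) * ?S (\<lambda>H. Pot ((step H ^^ Suc k) s))"
        by (rule expect_decomp[OF finU eU(1)])
      also have "?S (\<lambda>H. Pot ((step (insert e H) ^^ Suc k) s)) = ?S Y1"
      proof (rule sum.cong[OF refl])
        fix H assume "H \<in> Pow (U - {e})"
        have "Pot ((step (insert e H) ^^ Suc k) s) = Y1 H" unfolding X Y1i by simp
        thus "hprob (U - {e}) p H * Pot ((step (insert e H) ^^ Suc k) s) = hprob (U - {e}) p H * Y1 H" by simp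
      qed
      also have "?S (\<lambda>H. Pot ((step H ^^ Suc k) s)) = ?S Y2"
      proof (rule sum.cong[OF refl])
        fix H assume "H \<in> Pow (U - {e})"
        hence "e \<notin> H" by auto
        hence "Pot ((step H ^^ Suc k) s) = Y2 H" unfolding X by simp
        thus "hprob (U - {e}) p H * Pot ((step H ^^ Suc k) s) = hprob (U - {e}) p H * Y2 H" by simp
      qed
      finally have EX: "expect U p (\<lambda>H. Pot ((step H ^^ Suc k) s)) = p * expect U p Y1 + (1-p) * expect U p Y2"
        using E1 E2 by simp
      have "Pot s \<le> p * Pot s1 + (1-p) * Pot s2"
        unfolding s s1_def s2_def by (rule Pot_step[OF _ False e_def v_def]) (use inv s in simp)
      also have "\<dots> \<le> p * expect U p Y1 + (1-p) * expect U p Y2"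
        using Suc.IH[rule_format, OF inv1] Suc.IH[rule_format, OF inv2] p0 p1 unfolding Y1_def Y2_def
        by (intro add_mono mult_left_mono) auto
      finally show ?thesis using EX by simp
    qed
  qed
qed

theorem main:
  assumes c: "cP \<le> cT"
  shows "expect U p (\<lambda>H. case simulate U I f sel H of (M, N, w) \<Rightarrow> sum w (violated_removed F \<mu> N))
         \<ge> (1 - cT) * expect U p (\<lambda>H. case simulate U I f sel H of (M, N, w) \<Rightarrow> sum w N)"
proof -
  define s0 :: "'a set \<times> 'a set \<times> ('a \<Rightarrow> real)" where "s0 = ({}, {}, \<lambda>_. 0)"
  have sim: "simulate U I f sel H = (step H ^^ card U) s0" for H unfolding simulate_def s0_def by simp
  have inv0: "Inv s0" unfolding s0_def Inv_def lam_indep_def by simp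
  have P0: "Pot s0 = 0" unfolding s0_def Pot_def G_def by simp
  have le: "Pot ((step H ^^ card U) s0) \<le> (case (step H ^^ card U) s0 of (M, N, w) \<Rightarrow>
      sum w (violated_removed F \<mu> N) - (1 - cT) * sum w N)" for H
  proof -
    obtain M N w where eq: "(step H ^^ card U) s0 = (M,N,w)" by (cases "(step H ^^ card U) s0")
    have "Inv (M,N,w)" using Inv_funpow[OF inv0] eq by metis
    thus ?thesis using eq Pot_le_value[OF _ c] by simp
  qed
  have "0 \<le> expect U p (\<lambda>H. Pot ((step H ^^ card U) s0))" using super inv0 P0 by metis
  also have "\<dots> \<le> expect U p (\<lambda>H. case (step H ^^ card U) s0 of (M, N, w) \<Rightarrow>
      sum w (violated_removed F \<mu> N) - (1 - cT) * sum w N)"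
    using p0 p1 le by (intro expect_mono) auto
  also have "(\<lambda>H. case (step H ^^ card U) s0 of (M, N, w) \<Rightarrow> sum w (violated_removed F \<mu> N) - (1 - cT) * sum w N)
     = (\<lambda>H. (case (step H ^^ card U) s0 of (M, N, w) \<Rightarrow> sum w (violated_removed F \<mu> N))
            - (1 - cT) * (case (step H ^^ card U) s0 of (M, N, w) \<Rightarrow> sum w N))"
    by (auto split: prod.split)
  finally show ?thesis unfolding sim expect_lin by simp
qed

end


lemma e_ge: "5/2 \<le> exp (1::real)"
proof -
  have "(1 + 1/6) powr 6 < exp (1::real)" using exp_1_gt_powr[of 6] by simp
  moreover have "(1 + 1/6::real) powr 6 = (7/6)^6" by simp
  moreover have "(5/2::real) \<le> (7/6)^6" by (simp add: power_divide)
  ultimately show ?thesis by linarith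
qed

lemma y_small:
  fixes y :: real assumes "0 < y" "y < 1" "2*y/(1-y)^3 < 1"
  shows "y < 1/4"
proof (rule ccontr)
  assume "\<not> y < 1/4"
  hence y: "1/4 \<le> y" by simp
  have pos: "0 < (1-y)^3" using assms by simp
  have "2*y < (1-y)^3" using assms(3) pos by (simp add: divide_less_eq)
  moreover have "(1-y)^3 \<le> (3/4)^3" using y assms by (intro power_mono) auto
  moreover have "(3/4::real)^3 = 27/64" by (simp add: power_divide)
  ultimately show False using y by linarith
qed

lemma final_ineq:
  fixes y x :: real assumes "0 < y" "y < 1/4" "0 \<le> x" "x \<le> 8/5 * y"
  shows "x / (1 - x) \<le> 2*y/(1-y)^3"
proof -
  have x1: "0 < 1 - x" using assms by simp
  have d1: "0 < 1 - 8/5*y" using assms by simp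
  have "x / (1 - x) \<le> (8/5*y) / (1 - 8/5*y)"
    using assms x1 d1 by (intro frac_le) auto
  also have "\<dots> \<le> 2*y/(1-y)^3"
  proof -
    have c: "(1-y)^3 \<le> 1 - y"
    proof -
      have "(1-y)^2 \<le> 1" using assms by (intro power_le_one) auto
      hence "(1-y)*(1-y)^2 \<le> (1-y)*1" using assms by (intro mult_left_mono) auto
      thus ?thesis by (simp add: power3_eq_cube power2_eq_square)
    qed
    have "8/5*y*(1-y)^3 \<le> 8/5*y*(1-y)" using c assms by (intro mult_left_mono) auto
    also have "\<dots> \<le> 2*y*(1 - 8/5*y)"
    proof -
      have "0 \<le> y * (2/5 - 8/5*y)" using assms by (intro mult_nonneg_nonneg) auto
      moreover have "y * (2/5 - 8/5*y) = 2*y*(1-8/5*y) - 8/5*y*(1-y)" by (simp add: field_simps)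
      ultimately show ?thesis by linarith
    qed
    finally have "8/5*y*(1-y)^3 \<le> 2*y*(1 - 8/5*y)" .
    moreover have "0 < (1-y)^3" using assms by simp
    ultimately show ?thesis using d1 by (simp add: field_simps)
  qed
  finally show ?thesis .
qed

theorem lemma3:
  fixes U :: "'a set" and F :: "'a set set" and \<mu> :: "'a set \<Rightarrow> nat"
    and f :: "'a set \<Rightarrow> real" and p :: real
    and sel :: "'a set \<Rightarrow> 'a set \<Rightarrow> 'a set \<Rightarrow> 'a"
  assumes finU: "finite U"
    and FU: "\<forall>B\<in>F. B \<subseteq> U"
    and lam: "laminar F"
    and mu_pos: "\<forall>B\<in>F. \<mu> B > 0"
    and mu_strict: "\<forall>B\<in>F. \<forall>B'\<in>F. B \<subset> B' \<longrightarrow> \<mu> B < \<mu> B'"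
    and f_nonneg: "\<forall>T. T \<subseteq> U \<longrightarrow> f T \<ge> 0"
    and f_mono: "\<forall>S T. S \<subseteq> T \<longrightarrow> T \<subseteq> U \<longrightarrow> f S \<le> f T"
    and f_sub: "submodular_on U f"
    and p: "0 < p" "p < 1"
    and sel: "\<forall>M N C. C \<noteq> {} \<longrightarrow> sel M N C \<in> C"
    and beta: "2 * exp 1 * (1 - p) < 1"
  shows "expect U p (\<lambda>H. case simulate U (lam_indep U F \<mu>) f sel H of (M, N, w) \<Rightarrow>
             sum w (violated_removed F \<mu> N))
         \<ge> (1 - 2 * (2 * exp 1 * (1 - p)) / (1 - 2 * exp 1 * (1 - p)) ^ 3)
           * expect U p (\<lambda>H. case simulate U (lam_indep U F \<mu>) f sel H of (M, N, w) \<Rightarrow> sum w N)"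
proof -
  interpret L: lsim U F \<mu> f p sel
    by (rule lsim.intro[OF finU FU lam mu_pos mu_strict f_mono f_sub p(1) p(2) sel])
  define y where "y = 2 * exp 1 * (1 - p)"
  define cT where "cT = 2 * y / (1 - y) ^ 3"
  have y0: "0 < y" unfolding y_def using p by simp
  have y1: "y < 1" unfolding y_def using beta by simp
  have eqc: "(1 - 2 * (2 * exp 1 * (1 - p)) / (1 - 2 * exp 1 * (1 - p)) ^ 3) = 1 - cT"
    unfolding cT_def y_def by simp
  show ?thesis
  proof (cases "1 - cT \<le> 0")
    case True
    define s0 :: "'a set \<times> 'a set \<times> ('a \<Rightarrow> real)" where "s0 = ({}, {}, \<lambda>_. 0)"
    have sim: "simulate U (lam_indep U F \<mu>) f sel H = (sim_step U (lam_indep U F \<mu>) f sel H ^^ card U) s0" for H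
      unfolding simulate_def s0_def by simp
    have inv0: "L.Inv s0" unfolding s0_def L.Inv_def lam_indep_def by simp
    have nn: "0 \<le> (case simulate U (lam_indep U F \<mu>) f sel H of (M, N, w) \<Rightarrow> sum w N)
      \<and> 0 \<le> (case simulate U (lam_indep U F \<mu>) f sel H of (M, N, w) \<Rightarrow> sum w (violated_removed F \<mu> N))" for H
    proof -
      obtain M N w where eq: "simulate U (lam_indep U F \<mu>) f sel H = (M,N,w)"
        by (cases "simulate U (lam_indep U F \<mu>) f sel H")
      have "L.Inv (M,N,w)" using L.Inv_funpow[OF inv0] eq sim by metis
      hence wn: "\<forall>y\<in>N. 0 \<le> w y" unfolding L.Inv_def by auto
      have "violated_removed F \<mu> N \<subseteq> N" unfolding violated_removed_def by auto
      hence "0 \<le> sum w (violated_removed F \<mu> N)" using wn by (intro sum_nonneg) auto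
      moreover have "0 \<le> sum w N" using wn by (intro sum_nonneg) auto
      ultimately show ?thesis using eq by simp
    qed
    have EN: "0 \<le> expect U p (\<lambda>H. case simulate U (lam_indep U F \<mu>) f sel H of (M, N, w) \<Rightarrow> sum w N)"
      using expect_mono[of p U "\<lambda>_. 0"] expect_const[OF finU, of p 0] nn p by force
    have ES: "0 \<le> expect U p (\<lambda>H. case simulate U (lam_indep U F \<mu>) f sel H of (M, N, w) \<Rightarrow> sum w (violated_removed F \<mu> N))"
      using expect_mono[of p U "\<lambda>_. 0"] expect_const[OF finU, of p 0] nn p by force
    have "(1 - cT) * expect U p (\<lambda>H. case simulate U (lam_indep U F \<mu>) f sel H of (M, N, w) \<Rightarrow> sum w N) \<le> 0"
      using True EN by (simp add: mult_nonpos_nonneg)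
    thus ?thesis unfolding eqc using ES by linarith
  next
    case False
    have ys: "y < 1/4" using y_small[OF y0 y1] False unfolding cT_def by simp
    have xle: "8 * (1 - p) \<le> 8/5 * y"
    proof -
      have "8 * (1-p) \<le> 8/5 * ((5/2) * 2 * (1-p))" by simp
      also have "\<dots> \<le> 8/5 * (exp 1 * 2 * (1-p))" using e_ge p by (intro mult_left_mono mult_right_mono) auto
      finally show ?thesis unfolding y_def by (simp add: algebra_simps)
    qed
    have small: "8 * (1 - p) < 1" using xle ys by simp
    interpret L2: lsim2 U F \<mu> f p sel
      by (rule lsim2.intro[OF L.lsim_axioms]) (unfold_locales, rule small)
    have "L2.cP \<le> cT" unfolding L2.cP_def L2.xx_def cT_def
      using final_ineq[OF y0 ys _ xle] p by simp
    from L2.main[OF this] show ?thesis unfolding eqc .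
  qed
qed


end
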